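(* Let $R$ be a pre-Schreier domain and let $a,b,c,d\in R$. If $ab=cd$, $a$ and $c$ are relatively prime, and $b$ and $d$ are relatively prime, then $a\sim d$ and $b\sim c$.
   Context: A domain is a commutative ring with identity without zero divisors. A domain $R$ is pre-Schreier if every non-zero $a\in R$ is primal: whenever $a\mid bc$ with $b,c\in R$, there exist $a_1,a_2\in R$ with $a=a_1a_2$, $a_1\mid b$ and $a_2\mid c$. Elements $a,b$ are relatively prime if they have no common non-invertible divisor. $a\sim b$ means $a$ and $b$ are associated. *)

theory Defs
  imports Main
begin

definition primal :: "'a::idom \<Rightarrow> bool" where
  "primal a \<longleftrightarrow> (\<forall>b c. a dvd b * c \<longrightarrow>
     (\<exists>a1 a2. a = a1 * a2 \<and> a1 dvd b \<and> a2 dvd c))"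

definition pre_schreier :: "'a::idom itself \<Rightarrow> bool" where
  "pre_schreier _ \<longleftrightarrow> (\<forall>a::'a. a \<noteq> 0 \<longrightarrow> primal a)"

definition rel_prime :: "'a::idom \<Rightarrow> 'a \<Rightarrow> bool" where
  "rel_prime a b \<longleftrightarrow> (\<forall>x. x dvd a \<and> x dvd b \<longrightarrow> x dvd 1)"

definition associated :: "'a::idom \<Rightarrow> 'a \<Rightarrow> bool" where
  "associated a b \<longleftrightarrow> a dvd b \<and> b dvd a"

end

theory Submission
  imports Defs
begin

lemma key:
  fixes x y z :: "'a::idom"
  assumes "pre_schreier TYPE('a)" "x \<noteq> 0" "rel_prime x y" "x dvd y * z"
  shows "x dvd z"
proof -
  have "primal x" using assms(1,2) unfolding pre_schreier_def by blast
  then obtain a1 a2 where h: "x = a1 * a2" "a1 dvd y" "a2 dvd z"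
    using assms(4) unfolding primal_def by blast
  have "a1 dvd x" using h(1) by simp
  then have "a1 dvd 1" using assms(3) h(2) unfolding rel_prime_def by blast
  then obtain k where k: "1 = a1 * k" by (auto simp: dvd_def)
  have "a2 = x * k" using h(1) k by (metis mult.assoc mult.commute mult_1_right)
  then have "x dvd a2" by simp
  then show ?thesis using h(3) by (rule dvd_trans)
qed

lemma rp_sym: "rel_prime a b \<Longrightarrow> rel_prime b a"
  unfolding rel_prime_def by blast

lemma rp0: "rel_prime x 0 \<Longrightarrow> x dvd 1"
  unfolding rel_prime_def by auto

theorem lemma2:
  fixes a b c d :: "'a::idom"
  assumes "pre_schreier TYPE('a)"
    and "a * b = c * d"
    and "rel_prime a c"
    and "rel_prime b d"
  shows "associated a d \<and> associated b c"
proof (cases "a = 0 \<or> b = 0 \<or> c = 0 \<or> d = 0")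
  case True
  have rc: "rel_prime c a" "rel_prime d b" using assms(3,4) by (auto intro: rp_sym)
  have u0: "\<And>x::'a. x dvd 1 \<Longrightarrow> x \<noteq> 0" by auto
  consider "a = 0" | "c = 0" | "b = 0" | "d = 0" using True by blast
  then show ?thesis
  proof cases
    case 1
    have c1: "c dvd 1" using 1 rc(1) rp0 by blast
    have "d = 0" using assms(2) 1 u0[OF c1] by simp
    then have "b dvd 1" using assms(4) rp0 by blast
    then show ?thesis using 1 \<open>d = 0\<close> c1 unfolding associated_def by (auto intro: dvd_trans[OF _ one_dvd])
  next
    case 2
    have c1: "a dvd 1" using 2 assms(3) rp0 by blast
    have "b = 0" using assms(2) 2 u0[OF c1] by simp
    then have "d dvd 1" using rc(2) rp0 by blast
    then show ?thesis using 2 \<open>b = 0\<close> c1 unfolding associated_def by (auto intro: dvd_trans[OF _ one_dvd])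
  next
    case 3
    have c1: "d dvd 1" using 3 rc(2) rp0 by blast
    have "c = 0" using assms(2) 3 u0[OF c1] by simp
    then have "a dvd 1" using assms(3) rp0 by blast
    then show ?thesis using 3 \<open>c = 0\<close> c1 unfolding associated_def by (auto intro: dvd_trans[OF _ one_dvd])
  next
    case 4
    have c1: "b dvd 1" using 4 assms(4) rp0 by blast
    have "a = 0" using assms(2) 4 u0[OF c1] by simp
    then have "c dvd 1" using rc(1) rp0 by blast
    then show ?thesis using 4 \<open>a = 0\<close> c1 unfolding associated_def by (auto intro: dvd_trans[OF _ one_dvd])
  qed
next
  case False
  have rc: "rel_prime c a" "rel_prime d b" using assms(3,4) by (auto intro: rp_sym)
  have e1: "a dvd c * d" "c dvd a * b" "d dvd b * a" "b dvd d * c"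
    using dvd_triv_left[of a b] dvd_triv_right[of b a] dvd_triv_left[of c d] dvd_triv_right[of d c]
    by (simp_all add: assms(2) mult.commute)
  have 1: "a dvd d" using False by (intro key[OF assms(1) _ assms(3) e1(1)]) simp
  have 2: "c dvd b" using False by (intro key[OF assms(1) _ rc(1) e1(2)]) simp
  have 3: "d dvd a" using False by (intro key[OF assms(1) _ rc(2) e1(3)]) simp
  have 4: "b dvd c" using False by (intro key[OF assms(1) _ assms(4) e1(4)]) simp
  show ?thesis using 1 2 3 4 unfolding associated_def by auto
qed

end
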